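(* The category $\mathcal{C}(numOp)^{op}$ described in the context is not quasi-Gröbner.
   Context: Quasi-Gröbner categories. Let $\mathcal{C}$ be a small category and $c$ an object. An admissible order on the morphisms out of $c$ is a choice, for every object $c'$, of a well-order on $\mathrm{Hom}(c,c')$ such that $f\prec f'$ implies $g\circ f\prec g\circ f'$ for all $g$. On morphisms out of $c$ put the preorder $f\le g$ iff $g=h\circ f$ for some $h$; $|c/\mathcal{C}|$ is the associated poset. A poset is Noetherian if every sequence $x_1,x_2,\dots$ has $i<j$ with $x_i\le x_j$. $\mathcal{C}$ is Gröbner if for every object $c$: (G1) morphisms out of $c$ admit an admissible order, and (G2) $|c/\mathcal{C}|$ is Noetherian. A functor $\Phi:\mathcal{C}\to\mathcal{D}$ has property (F) if for every object $d$ of $\mathcal{D}$ there are finitely many objects $c_i$ of $\mathcal{C}$ and morphisms $f_i:d\to\Phi(c_i)$ such that every $f:d\to\Phi(c)$ factors as $\Phi(g)\circ f_i$ for some $i$ and $g:c_i\to c$. $\mathcal{D}$ is quasi-Gröbner if there is a Gröbner $\mathcal{C}$ and an essentially surjective functor $\mathcal{C}\to\mathcal{D}$ with property (F). Operadic graphs. A graph with half-edges is finite sets $V$, $H$, an involution $inv$ on $H$ and $t:H\to V$; fixed points of $inv$ are leaves, two-element orbits are edges. An operadic graph additionally has a total order on leaves (indexed $0,1,\dots$), for each vertex $v$ a total order on $t^{-1}(v)$, and a total order on $V$ (indexed $1,\dots,n$); considered up to isomorphism preserving all data. The category $\mathcal{C}(numOp)^{op}$: objects are connected operadic graphs with at least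 one vertex (loops, multiple edges and any number of leaves allowed). If $p$ has vertices $v_1<\dots<v_n$, a morphism $p\to q$ consists of such graphs $q_1,\dots,q_n$, $q_l$ having as many leaves as $v_l$ has half-edges, and a bijection $\bigsqcup_l V(q_l)\to V(q)$ order preserving on each $V(q_l)$, such that $q$ is obtained by substituting $q_l$ into $v_l$: the $i$-th leaf of $q_l$ is identified with the $i$-th half-edge of $v_l$; an edge of $p$ between the $i$-th half-edge of $v_j$ and the $k$-th half-edge of $v_l$ becomes an edge of $q$ between the $i$-th leaf of $q_j$ and the $k$-th leaf of $q_l$; if the $i$-th half-edge of $v_j$ is the $k$-th leaf of $p$ then the $i$-th leaf of $q_j$ is the $k$-th leaf of $q$; half-edge orders come from the $q_l$ and the vertex order of $q$ is transported along the bijection. Composition is iterated substitution. (This is the opposite of $\mathcal{C}(P)$ for $P$ the operad of modular operads, restricted to operations of non-zero arity.) *)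

theory Defs
  imports Main
begin

record ('o, 'm) category =
  Ob  :: "'o set"
  Mor :: "'m set"
  Dom :: "'m \<Rightarrow> 'o"
  Cod :: "'m \<Rightarrow> 'o"
  Idm :: "'o \<Rightarrow> 'm"
  Cmp :: "'m \<Rightarrow> 'm \<Rightarrow> 'm"   (* Cmp C g f = g \<circ> f *)

definition Hom :: "('o, 'm, 'x) category_scheme \<Rightarrow> 'o \<Rightarrow> 'o \<Rightarrow> 'm set" where
  "Hom C a b = {f \<in> Mor C. Dom C f = a \<and> Cod C f = b}"

definition is_category :: "('o, 'm, 'x) category_scheme \<Rightarrow> bool" where
  "is_category C \<longleftrightarrow>
     (\<forall>f\<in>Mor C. Dom C f \<in> Ob C \<and> Cod C f \<in> Ob C) \<and>
     (\<forall>a\<in>Ob C. Idm C a \<in> Hom C a a) \<and>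
     (\<forall>f\<in>Mor C. \<forall>g\<in>Mor C. Cod C f = Dom C g \<longrightarrow> Cmp C g f \<in> Hom C (Dom C f) (Cod C g)) \<and>
     (\<forall>f\<in>Mor C. Cmp C (Idm C (Cod C f)) f = f \<and> Cmp C f (Idm C (Dom C f)) = f) \<and>
     (\<forall>f\<in>Mor C. \<forall>g\<in>Mor C. \<forall>h\<in>Mor C. Cod C f = Dom C g \<longrightarrow> Cod C g = Dom C h \<longrightarrow>
        Cmp C h (Cmp C g f) = Cmp C (Cmp C h g) f)"

definition is_functor ::
  "('o, 'm, 'x) category_scheme \<Rightarrow> ('p, 'n, 'y) category_scheme \<Rightarrow> ('o \<Rightarrow> 'p) \<Rightarrow> ('m \<Rightarrow> 'n) \<Rightarrow> bool" where
  "is_functor C D Fo Fm \<longleftrightarrow>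
     (\<forall>a\<in>Ob C. Fo a \<in> Ob D) \<and>
     (\<forall>f\<in>Mor C. Fm f \<in> Hom D (Fo (Dom C f)) (Fo (Cod C f))) \<and>
     (\<forall>a\<in>Ob C. Fm (Idm C a) = Idm D (Fo a)) \<and>
     (\<forall>f\<in>Mor C. \<forall>g\<in>Mor C. Cod C f = Dom C g \<longrightarrow> Fm (Cmp C g f) = Cmp D (Fm g) (Fm f))"

definition isomorphic :: "('o, 'm, 'x) category_scheme \<Rightarrow> 'o \<Rightarrow> 'o \<Rightarrow> bool" where
  "isomorphic C a b \<longleftrightarrow> (\<exists>f\<in>Hom C a b. \<exists>g\<in>Hom C b a.
       Cmp C g f = Idm C a \<and> Cmp C f g = Idm C b)"

definition essentially_surjective ::
  "('o, 'm, 'x) category_scheme \<Rightarrow> ('p, 'n, 'y) category_scheme \<Rightarrow> ('o \<Rightarrow> 'p) \<Rightarrow> bool" where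
  "essentially_surjective C D Fo \<longleftrightarrow> (\<forall>d\<in>Ob D. \<exists>c\<in>Ob C. isomorphic D (Fo c) d)"

definition property_F ::
  "('o, 'm, 'x) category_scheme \<Rightarrow> ('p, 'n, 'y) category_scheme \<Rightarrow> ('o \<Rightarrow> 'p) \<Rightarrow> ('m \<Rightarrow> 'n) \<Rightarrow> bool" where
  "property_F C D Fo Fm \<longleftrightarrow>
     (\<forall>d\<in>Ob D. \<exists>I :: ('o \<times> 'n) set. finite I \<and>
        (\<forall>(ci, fi)\<in>I. ci \<in> Ob C \<and> fi \<in> Hom D d (Fo ci)) \<and>
        (\<forall>c\<in>Ob C. \<forall>f\<in>Hom D d (Fo c). \<exists>(ci, fi)\<in>I. \<exists>g\<in>Hom C ci c. f = Cmp D (Fm g) fi))"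

text \<open>A well-order in the sense of
  the library (\<open>well_order_on\<close>) is reflexive; the strict order is \<open>f \<noteq> f'\<close> plus membership.\<close>
definition admissible_order :: "('o, 'm, 'x) category_scheme \<Rightarrow> 'o \<Rightarrow> ('o \<Rightarrow> 'm rel) \<Rightarrow> bool" where
  "admissible_order C c R \<longleftrightarrow>
     (\<forall>c'\<in>Ob C. well_order_on (Hom C c c') (R c')) \<and>
     (\<forall>c'\<in>Ob C. \<forall>c''\<in>Ob C. \<forall>f\<in>Hom C c c'. \<forall>f'\<in>Hom C c c'. \<forall>g\<in>Hom C c' c''.
        (f, f') \<in> R c' \<and> f \<noteq> f' \<longrightarrow>
        (Cmp C g f, Cmp C g f') \<in> R c'' \<and> Cmp C g f \<noteq> Cmp C g f')"

definition out_le :: "('o, 'm, 'x) category_scheme \<Rightarrow> 'm \<Rightarrow> 'm \<Rightarrow> bool" where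
  "out_le C f g \<longleftrightarrow> (\<exists>h\<in>Mor C. Dom C h = Cod C f \<and> g = Cmp C h f)"

definition out_mor :: "('o, 'm, 'x) category_scheme \<Rightarrow> 'o \<Rightarrow> 'm set" where
  "out_mor C c = {f \<in> Mor C. Dom C f = c}"

text \<open>Noetherian condition for a (pre)ordered set: every sequence has i<j with x_i \<le> x_j.
  The poset |c/C| is Noetherian iff the preorder on its representatives is.\<close>
definition noetherian_on :: "'a set \<Rightarrow> ('a \<Rightarrow> 'a \<Rightarrow> bool) \<Rightarrow> bool" where
  "noetherian_on A le \<longleftrightarrow> (\<forall>s :: nat \<Rightarrow> 'a. (\<forall>k. s k \<in> A) \<longrightarrow> (\<exists>i j. i < j \<and> le (s i) (s j)))"

definition groebner :: "('o, 'm, 'x) category_scheme \<Rightarrow> bool" where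
  "groebner C \<longleftrightarrow> (\<forall>c\<in>Ob C. (\<exists>R. admissible_order C c R) \<and> noetherian_on (out_mor C c) (out_le C))"

text \<open>D is quasi-Groebner via the Groebner category C and the functor (Fo, Fm).
  Quasi-Groebner means: this holds for some small category C (of some types).\<close>
definition quasi_groebner_via ::
  "('o, 'm, 'x) category_scheme \<Rightarrow> ('p, 'n, 'y) category_scheme \<Rightarrow> ('o \<Rightarrow> 'p) \<Rightarrow> ('m \<Rightarrow> 'n) \<Rightarrow> bool" where
  "quasi_groebner_via C D Fo Fm \<longleftrightarrow> is_category C \<and> groebner C \<and> is_functor C D Fo Fm \<and>
     essentially_surjective C D Fo \<and> property_F C D Fo Fm"

text \<open>Canonical representative of an isomorphism class of operadic graphs:
  vertices are 0..<n (in their order), the half-edges at vertex v are (v,0),...,(v,deg v - 1)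
  (in their order), \<open>inv\<close> is the involution (identity outside the half-edges), and
  \<open>lvs\<close> lists the leaves in their order. Since all data is ordered these graphs are rigid,
  so isomorphism classes correspond exactly to well-formed records.\<close>
record ograph =
  deg :: "nat list"
  inv :: "nat \<times> nat \<Rightarrow> nat \<times> nat"
  lvs :: "(nat \<times> nat) list"

definition nv :: "ograph \<Rightarrow> nat" where "nv g = length (deg g)"

definition hes :: "ograph \<Rightarrow> (nat \<times> nat) set" where
  "hes g = {(v, i). v < nv g \<and> i < deg g ! v}"

definition wf_ograph :: "ograph \<Rightarrow> bool" where
  "wf_ograph g \<longleftrightarrow>
     (\<forall>h\<in>hes g. inv g h \<in> hes g \<and> inv g (inv g h) = h) \<and>
     (\<forall>h. h \<notin> hes g \<longrightarrow> inv g h = h) \<and>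
     distinct (lvs g) \<and> set (lvs g) = {h \<in> hes g. inv g h = h}"

definition adj :: "ograph \<Rightarrow> (nat \<times> nat) set" where
  "adj g = {(v, w). \<exists>i j. (v, i) \<in> hes g \<and> inv g (v, i) = (w, j) \<and> (w, j) \<noteq> (v, i)}"

definition connected_og :: "ograph \<Rightarrow> bool" where
  "connected_og g \<longleftrightarrow> (\<forall>v < nv g. \<forall>w < nv g. (v, w) \<in> (adj g)\<^sup>*)"

definition is_obj :: "ograph \<Rightarrow> bool" where
  "is_obj g \<longleftrightarrow> wf_ograph g \<and> nv g \<ge> 1 \<and> connected_og g"

text \<open>A bijection from the disjoint union of the V(q_l) to V(q), order preserving on each
  V(q_l), is encoded by the list \<sigma> with \<sigma>!j = the block l containing vertex j of q.\<close>
definition blk :: "nat list \<Rightarrow> nat \<Rightarrow> nat list" where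
  "blk \<sigma> l = filter (\<lambda>j. \<sigma> ! j = l) [0..<length \<sigma>]"

definition pos :: "nat list \<Rightarrow> nat \<Rightarrow> nat" where
  "pos \<sigma> j = length (filter (\<lambda>j'. \<sigma> ! j' = \<sigma> ! j) [0..<j])"

definition up :: "nat list \<Rightarrow> nat \<Rightarrow> nat \<times> nat \<Rightarrow> nat \<times> nat" where
  "up \<sigma> l h = (blk \<sigma> l ! fst h, snd h)"

definition subst_deg :: "ograph list \<Rightarrow> nat list \<Rightarrow> nat list" where
  "subst_deg qs \<sigma> = map (\<lambda>j. deg (qs ! (\<sigma> ! j)) ! pos \<sigma> j) [0..<length \<sigma>]"

definition subst_inv :: "ograph \<Rightarrow> ograph list \<Rightarrow> nat list \<Rightarrow> nat \<times> nat \<Rightarrow> nat \<times> nat" where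
  "subst_inv p qs \<sigma> = (\<lambda>(j, i).
     if j < length \<sigma> \<and> i < subst_deg qs \<sigma> ! j then
       (let l = \<sigma> ! j; g = qs ! l; h = (pos \<sigma> j, i) in
        if inv g h \<noteq> h then up \<sigma> l (inv g h)
        else (let k = (LEAST k. k < length (lvs g) \<and> lvs g ! k = h); e = inv p (l, k) in
              if e \<noteq> (l, k) then up \<sigma> (fst e) (lvs (qs ! fst e) ! snd e) else (j, i)))
     else (j, i))"

definition subst_lvs :: "ograph \<Rightarrow> ograph list \<Rightarrow> nat list \<Rightarrow> (nat \<times> nat) list" where
  "subst_lvs p qs \<sigma> = map (\<lambda>e. up \<sigma> (fst e) (lvs (qs ! fst e) ! snd e)) (lvs p)"

definition subst :: "ograph \<Rightarrow> ograph list \<Rightarrow> nat list \<Rightarrow> ograph" where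
  "subst p qs \<sigma> = \<lparr>deg = subst_deg qs \<sigma>, inv = subst_inv p qs \<sigma>, lvs = subst_lvs p qs \<sigma>\<rparr>"

definition morph_data :: "ograph \<Rightarrow> ograph list \<Rightarrow> nat list \<Rightarrow> bool" where
  "morph_data p qs \<sigma> \<longleftrightarrow> length qs = nv p \<and>
     (\<forall>l < nv p. is_obj (qs ! l) \<and> length (lvs (qs ! l)) = deg p ! l \<and>
                 length (blk \<sigma> l) = nv (qs ! l)) \<and>
     (\<forall>j < length \<sigma>. \<sigma> ! j < nv p)"

definition is_morph :: "ograph \<Rightarrow> ograph \<Rightarrow> ograph list \<Rightarrow> nat list \<Rightarrow> bool" where
  "is_morph p q qs \<sigma> \<longleftrightarrow> is_obj p \<and> is_obj q \<and> morph_data p qs \<sigma> \<and> subst p qs \<sigma> = q"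

definition corolla :: "nat \<Rightarrow> ograph" where
  "corolla d = \<lparr>deg = [d], inv = id, lvs = map (\<lambda>i. (0, i)) [0..<d]\<rparr>"

text \<open>Composition (iterated substitution) of (qs,\<sigma>) : p \<rightarrow> q followed by (rs,\<tau>) : q \<rightarrow> r.\<close>
definition comp_data :: "ograph list \<times> nat list \<Rightarrow> ograph list \<times> nat list \<Rightarrow> ograph list \<times> nat list" where
  "comp_data f g = (case f of (qs, \<sigma>) \<Rightarrow> case g of (rs, \<tau>) \<Rightarrow>
     (map (\<lambda>l. subst (qs ! l) (map (\<lambda>u. rs ! u) (blk \<sigma> l))
               (map (\<lambda>j. pos \<sigma> (\<tau> ! j)) (filter (\<lambda>j. \<sigma> ! (\<tau> ! j) = l) [0..<length \<tau>])))
          [0..<length qs],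
      map (\<lambda>x. \<sigma> ! x) \<tau>))"

type_synonym numOp_mor = "ograph \<times> ograph \<times> ograph list \<times> nat list"

text \<open>The category C(numOp)^op. A morphism is (source, target, (q_1..q_n), \<sigma>).\<close>
definition numOp_cat :: "(ograph, numOp_mor) category" where
  "numOp_cat = \<lparr>Ob = {g. is_obj g},
     Mor = {(p, q, qs, \<sigma>). is_morph p q qs \<sigma>},
     Dom = (\<lambda>f. fst f),
     Cod = (\<lambda>f. fst (snd f)),
     Idm = (\<lambda>p. (p, p, map corolla (deg p), [0..<nv p])),
     Cmp = (\<lambda>g f. (fst f, fst (snd g), comp_data (snd (snd f)) (snd (snd g))))\<rparr>"

end

theory Submission
  imports Defs "HOL-Library.Infinite_Set"
begin

lemma nv_subst[simp]: "nv (subst p qs \<sigma>) = length \<sigma>"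
  by (simp add: nv_def subst_def subst_deg_def)

lemma lvs_len_subst: "length (lvs (subst p qs \<sigma>)) = length (lvs p)"
  by (simp add: subst_def subst_lvs_def)

lemma sum_ind_one: "(a::nat) < n \<Longrightarrow> (\<Sum>l<n. (if a = l then 1 else 0)) = (1::nat)"
  by (simp add: sum.If_cases)

lemma sum_blk_aux:
  fixes \<sigma> :: "nat list"
  assumes "\<forall>j < length \<sigma>. \<sigma> ! j < n" "m \<le> length \<sigma>"
  shows "(\<Sum>l<n. length (filter (\<lambda>j. \<sigma> ! j = l) [0..<m])) = m"
  using assms(2)
proof (induction m)
  case 0 then show ?case by simp
next
  case (Suc m)
  have "(\<Sum>l<n. length (filter (\<lambda>j. \<sigma> ! j = l) [0..<Suc m]))
     = (\<Sum>l<n. length (filter (\<lambda>j. \<sigma> ! j = l) [0..<m]) + (if \<sigma> ! m = l then 1 else 0))"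
    by (rule sum.cong) auto
  also have "\<dots> = m + 1"
  proof -
    have "\<sigma> ! m < n" using Suc assms(1) by simp
    then have "(\<Sum>l<n. (if \<sigma> ! m = l then 1 else 0)) = (1::nat)" by (rule sum_ind_one)
    then show ?thesis using Suc by (simp add: sum.distrib)
  qed
  finally show ?case by simp
qed

lemma sum_blk:
  assumes "\<forall>j < length \<sigma>. \<sigma> ! j < n"
  shows "(\<Sum>l<n. length (blk \<sigma> l)) = length \<sigma>"
  using sum_blk_aux[OF assms order_refl] by (simp add: blk_def)

lemma is_obj_nv: "is_obj g \<Longrightarrow> nv g \<ge> 1" by (simp add: is_obj_def)

lemma morph_nv_le:
  assumes "is_morph p q qs \<sigma>"
  shows "nv p \<le> nv q"
proof -
  have md: "morph_data p qs \<sigma>" and qq: "q = subst p qs \<sigma>" using assms by (auto simp: is_morph_def)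
  have "(\<Sum>l<nv p. (1::nat)) \<le> (\<Sum>l<nv p. length (blk \<sigma> l))"
    apply (rule sum_mono) using md is_obj_nv by (force simp: morph_data_def)
  also have "\<dots> = length \<sigma>" using md sum_blk[of \<sigma> "nv p"] by (simp add: morph_data_def)
  finally show ?thesis using qq by simp
qed

lemma morph_lvs: "is_morph p q qs \<sigma> \<Longrightarrow> length (lvs q) = length (lvs p)"
  by (auto simp: is_morph_def lvs_len_subst)

definition NL :: "ograph \<Rightarrow> (nat \<times> nat) set" where
  "NL g = {h \<in> hes g. fst (inv g h) \<noteq> fst h}"

lemma finite_hes: "finite (hes g)"
proof -
  have "hes g \<subseteq> {..<nv g} \<times> {..<Max (set (deg g))}"
    unfolding hes_def nv_def by (auto simp: less_le_trans)
  then show ?thesis by (rule finite_subset) auto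
qed

lemma finite_NL: "finite (NL g)"
  unfolding NL_def using finite_hes by simp

lemma blk_one:
  assumes md: "morph_data p qs \<sigma>" and eq: "length \<sigma> = nv p"
  shows "\<forall>l<nv p. length (blk \<sigma> l) = 1"
proof -
  let ?x = "\<lambda>l. length (blk \<sigma> l)"
  have ge: "\<forall>l<nv p. ?x l \<ge> 1" using md is_obj_nv by (force simp: morph_data_def)
  have "(\<Sum>l<nv p. ?x l) = length \<sigma>" using md sum_blk[of \<sigma> "nv p"] by (simp add: morph_data_def)
  also have "(\<Sum>l<nv p. ?x l) = (\<Sum>l<nv p. (?x l - 1)) + (\<Sum>l<nv p. 1)"
    unfolding sum.distrib[symmetric] by (rule sum.cong) (use ge in auto)
  finally have "(\<Sum>l<nv p. (?x l - 1)) = 0" using eq by simp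
  then have "\<forall>l<nv p. ?x l - 1 = 0" by simp
  then show ?thesis using ge by (metis le_antisym diff_is_0_eq)
qed

lemma blk_single:
  assumes j: "j < length \<sigma>" and one: "length (blk \<sigma> (\<sigma> ! j)) = 1"
  shows "blk \<sigma> (\<sigma> ! j) = [j]" "pos \<sigma> j = 0"
proof -
  have jin: "j \<in> set (blk \<sigma> (\<sigma> ! j))" using j by (simp add: blk_def)
  from one obtain a where a: "blk \<sigma> (\<sigma> ! j) = [a]" by (metis length_0_conv length_Suc_conv One_nat_def)
  with jin show "blk \<sigma> (\<sigma> ! j) = [j]" by simp
  let ?P = "\<lambda>j'. \<sigma> ! j' = \<sigma> ! j"
  have "[0..<length \<sigma>] = [0..<j] @ [j..<length \<sigma>]" using j
    by (metis le_add1 le_add_diff_inverse less_imp_le upt_add_eq_append zero_le)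
  then have "blk \<sigma> (\<sigma> ! j) = filter ?P [0..<j] @ filter ?P [j..<length \<sigma>]"
    by (simp add: blk_def)
  moreover have "j \<in> set (filter ?P [j..<length \<sigma>])" using j by simp
  then have "length (filter ?P [j..<length \<sigma>]) \<ge> 1"
    by (metis One_nat_def Suc_leI length_pos_if_in_set)
  ultimately have "length (filter ?P [0..<j]) = 0" using one
    by (metis (no_types, lifting) add_diff_cancel_right' diff_is_0_eq length_append)
  then show "pos \<sigma> j = 0" by (simp add: pos_def)
qed

lemma obj_wf: "is_obj g \<Longrightarrow> wf_ograph g" by (simp add: is_obj_def)

lemma wf_inv_hes: "wf_ograph g \<Longrightarrow> h \<in> hes g \<Longrightarrow> inv g h \<in> hes g"
  by (simp add: wf_ograph_def)

lemma wf_lvs_hes: "wf_ograph g \<Longrightarrow> k < length (lvs g) \<Longrightarrow> lvs g ! k \<in> hes g"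
  unfolding wf_ograph_def by (metis (mono_tags, lifting) mem_Collect_eq nth_mem)

lemma wf_leaf: "wf_ograph g \<Longrightarrow> h \<in> hes g \<Longrightarrow> inv g h = h \<Longrightarrow> \<exists>k. k < length (lvs g) \<and> lvs g ! k = h"
  unfolding wf_ograph_def by (metis (mono_tags, lifting) in_set_conv_nth mem_Collect_eq)

lemma hes_one: "nv g = 1 \<Longrightarrow> h \<in> hes g \<Longrightarrow> fst h = 0"
  by (auto simp: hes_def)

lemma hes_iff: "(v, i) \<in> hes g \<longleftrightarrow> v < nv g \<and> i < deg g ! v"
  by (simp add: hes_def)

lemma key_point:
  assumes m: "is_morph p q qs \<sigma>" and eqn: "nv p = nv q" and hq: "(j, i) \<in> NL q"
  defines "g \<equiv> qs ! (\<sigma> ! j)"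
  defines "k0 \<equiv> (LEAST k. k < length (lvs g) \<and> lvs g ! k = (0, i))"
  shows "j < length \<sigma> \<and> k0 < length (lvs g) \<and> lvs g ! k0 = (0, i) \<and> (\<sigma> ! j, k0) \<in> NL p"
proof -
  have md: "morph_data p qs \<sigma>" and qq: "q = subst p qs \<sigma>" and op: "is_obj p"
    using m by (auto simp: is_morph_def)
  have len: "length \<sigma> = nv p" using eqn qq by simp
  have one: "\<forall>l<nv p. length (blk \<sigma> l) = 1" by (rule blk_one[OF md len])
  have hesq: "(j, i) \<in> hes q" and nl: "fst (inv q (j, i)) \<noteq> j" using hq by (auto simp: NL_def)
  have j: "j < length \<sigma>" using hesq qq by (simp add: hes_iff)
  define l where "l = \<sigma> ! j"
  have l: "l < nv p" using md j by (simp add: morph_data_def l_def)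
  have bl: "blk \<sigma> l = [j]" and ps: "pos \<sigma> j = 0" using blk_single[OF j] one l by (auto simp: l_def)
  have go: "is_obj g" and glen: "length (lvs g) = deg p ! l" and gnv: "nv g = 1"
    using md l one by (auto simp: morph_data_def g_def l_def)
  have gwf: "wf_ograph g" using go by (rule obj_wf)
  have pwf: "wf_ograph p" using op by (rule obj_wf)
  have ideg: "i < deg g ! 0" using hesq qq j ps by (simp add: hes_iff subst_def subst_deg_def g_def l_def)
  have h0: "(0, i) \<in> hes g" using ideg gnv by (simp add: hes_iff)
  have invq: "inv q (j, i) = subst_inv p qs \<sigma> (j, i)" using qq by (simp add: subst_def)
  have sdeg: "i < subst_deg qs \<sigma> ! j" using ideg j ps by (simp add: subst_deg_def g_def l_def)
  have leaf: "inv g (0, i) = (0, i)"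
  proof (rule ccontr)
    assume ne: "inv g (0, i) \<noteq> (0, i)"
    have "inv q (j, i) = up \<sigma> l (inv g (0, i))"
      using invq j sdeg ne ps by (simp add: subst_inv_def Let_def g_def l_def)
    moreover have "fst (inv g (0, i)) = 0" using hes_one[OF gnv wf_inv_hes[OF gwf h0]] .
    ultimately have "fst (inv q (j, i)) = j" using bl by (simp add: up_def)
    with nl show False by simp
  qed
  obtain k where "k < length (lvs g) \<and> lvs g ! k = (0, i)" using wf_leaf[OF gwf h0 leaf] by blast
  then have k0: "k0 < length (lvs g) \<and> lvs g ! k0 = (0, i)" unfolding k0_def by (rule LeastI)
  define e where "e = inv p (l, k0)"
  have lk: "(l, k0) \<in> hes p" using k0 l glen by (simp add: hes_iff)
  have ehes: "e \<in> hes p" unfolding e_def by (rule wf_inv_hes[OF pwf lk])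
  have ival: "inv q (j, i) = (if e \<noteq> (l, k0) then up \<sigma> (fst e) (lvs (qs ! fst e) ! snd e) else (j, i))"
    using invq j sdeg leaf ps by (simp add: subst_inv_def Let_def g_def l_def k0_def e_def)
  have ne: "e \<noteq> (l, k0)" using ival nl by auto
  have fe: "fst e \<noteq> l"
  proof
    assume fe: "fst e = l"
    have "snd e < length (lvs g)" using ehes fe glen by (cases e) (simp add: hes_iff)
    then have "lvs g ! snd e \<in> hes g" by (rule wf_lvs_hes[OF gwf])
    then have "fst (lvs g ! snd e) = 0" by (rule hes_one[OF gnv])
    then have "fst (inv q (j, i)) = j" using ival ne fe bl by (simp add: up_def g_def l_def)
    with nl show False by simp
  qed
  have "(l, k0) \<in> NL p" using lk fe by (simp add: NL_def e_def)
  then show ?thesis using j k0 by (simp add: l_def)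
qed

lemma NL_card_le:
  assumes m: "is_morph p q qs \<sigma>" and eqn: "nv p = nv q"
  shows "card (NL q) \<le> card (NL p)"
proof -
  define F where "F = (\<lambda>(j::nat, i::nat). (\<sigma> ! j,
     LEAST k. k < length (lvs (qs ! (\<sigma> ! j))) \<and> lvs (qs ! (\<sigma> ! j)) ! k = (0, i)))"
  have md: "morph_data p qs \<sigma>" and qq: "q = subst p qs \<sigma>"
    using m by (auto simp: is_morph_def)
  have len: "length \<sigma> = nv p" using eqn qq by simp
  have one: "\<forall>l<nv p. length (blk \<sigma> l) = 1" by (rule blk_one[OF md len])
  have sinj: "j = j'" if "j < length \<sigma>" "j' < length \<sigma>" "\<sigma> ! j = \<sigma> ! j'" for j j'
  proof -
    have "\<forall>j < length \<sigma>. \<sigma> ! j < nv p" using md unfolding morph_data_def by (elim conjE)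
    then have "\<sigma> ! j < nv p" "\<sigma> ! j' < nv p" using that(1,2) by blast+
    then have "length (blk \<sigma> (\<sigma> ! j)) = 1" "length (blk \<sigma> (\<sigma> ! j')) = 1" using one by blast+
    then have "blk \<sigma> (\<sigma> ! j) = [j]" "blk \<sigma> (\<sigma> ! j') = [j']"
      using blk_single(1)[of j \<sigma>] blk_single(1)[of j' \<sigma>] that(1,2) by blast+
    then show ?thesis using that(3) by (metis list.inject)
  qed
  have img: "F ` NL q \<subseteq> NL p"
  proof
    fix x assume "x \<in> F ` NL q"
    then obtain j i where "(j, i) \<in> NL q" "x = F (j, i)" by auto
    then show "x \<in> NL p" using key_point[OF m eqn, of j i] unfolding F_def by (simp only: case_prod_conv)
  qed
  have "inj_on F (NL q)"
  proof (rule inj_onI)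
    fix x y assume x: "x \<in> NL q" and y: "y \<in> NL q" and fxy: "F x = F y"
    obtain j i where xx: "x = (j, i)" by (cases x)
    obtain j' i' where yy: "y = (j', i')" by (cases y)
    note kx = key_point[OF m eqn x[unfolded xx]]
    note ky = key_point[OF m eqn y[unfolded yy]]
    have "\<sigma> ! j = \<sigma> ! j'" using fxy unfolding xx yy F_def by (simp only: case_prod_conv prod.inject)
    then have jj: "j = j'" by (rule sinj[OF kx[THEN conjunct1] ky[THEN conjunct1]])
    let ?L = "\<lambda>i. (LEAST k. k < length (lvs (qs ! (\<sigma> ! j))) \<and> lvs (qs ! (\<sigma> ! j)) ! k = (0, i))"
    have "?L i = ?L i'" using fxy unfolding xx yy jj F_def by (simp only: case_prod_conv prod.inject)
    moreover have "lvs (qs ! (\<sigma> ! j)) ! ?L i = (0, i)" using kx by (simp only:)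
    moreover have "lvs (qs ! (\<sigma> ! j)) ! ?L i' = (0, i')" using ky unfolding jj by (simp only:)
    ultimately have "i = i'" by (metis prod.inject)
    then show "x = y" using xx yy jj by simp
  qed
  then show ?thesis using img finite_NL by (rule card_inj_on_le)
qed

definition banana :: "nat \<Rightarrow> ograph" where
  "banana k = \<lparr>deg = [k, k], inv = (\<lambda>(v, i). if v < 2 \<and> i < k then (1 - v, i) else (v, i)), lvs = []\<rparr>"

lemma nth_kk[simp]: "a < 2 \<Longrightarrow> [k, k] ! a = k"
  by (auto simp: less_2_cases_iff)

lemma nth_kk'[simp]: "a < Suc (Suc 0) \<Longrightarrow> [k, k] ! a = k"
  using nth_kk[of a k] by simp

lemma two_ne[simp]: "a < (2::nat) \<Longrightarrow> Suc 0 - a \<noteq> a"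
  by arith

lemma hes_banana: "hes (banana k) = {(v, i). v < 2 \<and> i < k}"
  by (auto simp: hes_def banana_def nv_def less_2_cases_iff)

lemma NL_banana: "NL (banana k) = {(v, i). v < 2 \<and> i < k}"
  by (auto simp: NL_def hes_banana) (auto simp: banana_def)

lemma card_NL_banana: "card (NL (banana k)) = 2 * k"
proof -
  have "{(v, i). v < 2 \<and> i < k} = {..<(2::nat)} \<times> {..<k}" by auto
  then show ?thesis by (simp add: NL_banana)
qed

lemma nv_banana[simp]: "nv (banana k) = 2" by (simp add: nv_def banana_def)
lemma lvs_banana[simp]: "lvs (banana k) = []" by (simp add: banana_def)

lemma obj_banana: "k \<ge> 1 \<Longrightarrow> is_obj (banana k)"
proof -
  assume k: "k \<ge> 1"
  have wf: "wf_ograph (banana k)"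
    unfolding wf_ograph_def hes_banana by (auto simp: banana_def)
  have a01: "(0, 1) \<in> adj (banana k)" and a10: "(1, 0) \<in> adj (banana k)"
    unfolding adj_def hes_banana using k by (auto simp: banana_def intro: exI[of _ 0])
  have "connected_og (banana k)"
    unfolding connected_og_def
  proof (intro allI impI)
    fix v w :: nat assume "v < nv (banana k)" "w < nv (banana k)"
    then have "v < 2" "w < 2" by auto
    then show "(v, w) \<in> (adj (banana k))\<^sup>*" using a01 a10
      by (auto simp: less_2_cases_iff)
  qed
  then show ?thesis using wf by (simp add: is_obj_def)
qed

lemma obj_corolla0: "is_obj (corolla 0)"
  by (auto simp: is_obj_def wf_ograph_def hes_def corolla_def nv_def connected_og_def)

lemma blk_rep: "blk (replicate n 0) 0 = [0..<n]"
  by (simp add: blk_def filter_True)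

lemma pos_rep: "j < n \<Longrightarrow> pos (replicate n 0) j = j"
  by (simp add: pos_def filter_True)

lemma subst_corolla0:
  assumes X: "is_obj X" and L: "lvs X = []"
  shows "subst (corolla 0) [X] (replicate (nv X) 0) = X"
proof -
  let ?\<sigma> = "replicate (nv X) 0"
  have wf: "wf_ograph X" using X by (rule obj_wf)
  have d: "subst_deg [X] ?\<sigma> = deg X"
    by (rule nth_equalityI) (auto simp: subst_deg_def pos_rep nv_def)
  have i: "subst_inv (corolla 0) [X] ?\<sigma> h = inv X h" for h
  proof (cases h)
    case (Pair j i)
    show ?thesis
    proof (cases "(j, i) \<in> hes X")
      case True
      then have j: "j < nv X" and ii: "i < deg X ! j" by (auto simp: hes_iff)
      have ih: "inv X (j, i) \<in> hes X" using wf True by (rule wf_inv_hes)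
      then have "fst (inv X (j, i)) < nv X" by (cases "inv X (j, i)") (simp add: hes_iff)
      then show ?thesis using j ii d Pair
        by (auto simp: subst_inv_def Let_def pos_rep up_def blk_rep corolla_def)
    next
      case False
      then have "inv X (j, i) = (j, i)" using wf by (simp add: wf_ograph_def)
      moreover have "\<not> (j < length ?\<sigma> \<and> i < subst_deg [X] ?\<sigma> ! j)"
        using False d by (auto simp: hes_iff nv_def)
      ultimately show ?thesis using Pair by (auto simp: subst_inv_def)
    qed
  qed
  have l: "subst_lvs (corolla 0) [X] ?\<sigma> = lvs X" using L by (simp add: subst_lvs_def corolla_def)
  have "subst_inv (corolla 0) [X] ?\<sigma> = inv X" by (rule ext) (rule i)
  then show ?thesis using d l by (simp add: subst_def)
qed

lemma morph_from_corolla0: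
  assumes X: "is_obj X" and L: "lvs X = []"
  shows "is_morph (corolla 0) X [X] (replicate (nv X) 0)"
  unfolding is_morph_def
  using obj_corolla0 X L subst_corolla0[OF X L]
  by (auto simp: morph_data_def nv_def corolla_def blk_rep)

lemma hom_numOp: "f \<in> Hom numOp_cat a b \<Longrightarrow> \<exists>qs \<sigma>. is_morph a b qs \<sigma>"
  by (cases f) (auto simp: Hom_def numOp_cat_def)

lemma hom_numOp_I: "is_morph a b qs \<sigma> \<Longrightarrow> (a, b, qs, \<sigma>) \<in> Hom numOp_cat a b"
  by (auto simp: Hom_def numOp_cat_def)

lemma Ob_numOp: "Ob numOp_cat = {g. is_obj g}" by (simp add: numOp_cat_def)

lemma iso_facts:
  assumes "isomorphic numOp_cat X (banana (Suc k))"
  shows "is_obj X \<and> nv X = 2 \<and> lvs X = [] \<and> card (NL X) = 2 * Suc k"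
proof -
  obtain f g where f: "f \<in> Hom numOp_cat X (banana (Suc k))" and g: "g \<in> Hom numOp_cat (banana (Suc k)) X"
    using assms unfolding isomorphic_def by blast
  obtain qs \<sigma> where m1: "is_morph X (banana (Suc k)) qs \<sigma>" using hom_numOp[OF f] by blast
  obtain rs \<tau> where m2: "is_morph (banana (Suc k)) X rs \<tau>" using hom_numOp[OF g] by blast
  have o: "is_obj X" using m1 by (simp add: is_morph_def)
  have n: "nv X = 2" using morph_nv_le[OF m1] morph_nv_le[OF m2] by simp
  have l: "lvs X = []" using morph_lvs[OF m1] by simp
  have "card (NL X) \<le> 2 * Suc k" using NL_card_le[OF m2] n card_NL_banana[of "Suc k"] by simp
  moreover have "2 * Suc k \<le> card (NL X)" using NL_card_le[OF m1] n card_NL_banana[of "Suc k"] by simp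
  ultimately show ?thesis using o n l by simp
qed

theorem proposition3p12:
  fixes C :: "('o, 'm) category" and Fo :: "'o \<Rightarrow> ograph" and Fm :: "'m \<Rightarrow> numOp_mor"
  shows "\<not> quasi_groebner_via C numOp_cat Fo Fm"
proof
  assume "quasi_groebner_via C numOp_cat Fo Fm"
  then have catC: "is_category C" and gr: "groebner C" and fnc: "is_functor C numOp_cat Fo Fm"
    and es: "essentially_surjective C numOp_cat Fo" and pF: "property_F C numOp_cat Fo Fm"
    by (auto simp: quasi_groebner_via_def)
  have "\<forall>k. \<exists>c\<in>Ob C. isomorphic numOp_cat (Fo c) (banana (Suc k))"
    using es obj_banana unfolding essentially_surjective_def Ob_numOp by simp
  then obtain c where c: "\<And>k. c k \<in> Ob C" "\<And>k. isomorphic numOp_cat (Fo (c k)) (banana (Suc k))"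
    by metis
  note X = iso_facts[OF c(2)]
  define u where "u k = (corolla 0, Fo (c k), [Fo (c k)], replicate (nv (Fo (c k))) (0::nat))" for k
  have u: "u k \<in> Hom numOp_cat (corolla 0) (Fo (c k))" for k
    unfolding u_def using X[of k] by (intro hom_numOp_I morph_from_corolla0) auto
  obtain I where I: "finite I" "\<forall>(ci, fi)\<in>I. ci \<in> Ob C \<and> fi \<in> Hom numOp_cat (corolla 0) (Fo ci)"
    "\<forall>c\<in>Ob C. \<forall>f\<in>Hom numOp_cat (corolla 0) (Fo c). \<exists>(ci, fi)\<in>I. \<exists>g\<in>Hom C ci c.
        f = Cmp numOp_cat (Fm g) fi"
  proof -
    have "corolla 0 \<in> Ob numOp_cat" using obj_corolla0 by (simp add: Ob_numOp)
    then have "\<exists>I :: ('o \<times> numOp_mor) set. finite I \<and>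
        (\<forall>(ci, fi)\<in>I. ci \<in> Ob C \<and> fi \<in> Hom numOp_cat (corolla 0) (Fo ci)) \<and>
        (\<forall>c\<in>Ob C. \<forall>f\<in>Hom numOp_cat (corolla 0) (Fo c). \<exists>(ci, fi)\<in>I. \<exists>g\<in>Hom C ci c.
        f = Cmp numOp_cat (Fm g) fi)"
      by (rule bspec[OF pF[unfolded property_F_def]])
    then show ?thesis using that by (elim exE conjE)
  qed
  define R where "R k x = (\<exists>g\<in>Hom C (fst x) (c k). u k = Cmp numOp_cat (Fm g) (snd x))" for k x
  have "\<forall>k\<in>UNIV. \<exists>x\<in>I. R k x"
  proof
    fix k :: nat
    have "\<exists>(ci, fi)\<in>I. \<exists>g\<in>Hom C ci (c k). u k = Cmp numOp_cat (Fm g) fi"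
      using bspec[OF bspec[OF I(3) c(1)[of k]] u[of k]] .
    then obtain y where y: "y \<in> I" "case_prod (\<lambda>ci fi. \<exists>g\<in>Hom C ci (c k). u k = Cmp numOp_cat (Fm g) fi) y"
      by (rule bexE)
    have "R k y" using y(2) unfolding R_def by (simp add: case_prod_beta)
    then show "\<exists>x\<in>I. R k x" using y(1) by blast
  qed
  then obtain x where x: "x \<in> I" and inf: "infinite {k \<in> UNIV. R k x}"
    using pigeonhole_infinite_rel[OF infinite_UNIV_nat I(1)] by blast
  obtain r :: "nat \<Rightarrow> nat" where r: "strict_mono r" "\<And>n. r n \<in> {k \<in> UNIV. R k x}"
    using infinite_enumerate[OF inf] by blast
  define ci where "ci = fst x"
  have ci: "ci \<in> Ob C" using I(2) x by (auto simp: ci_def)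
  define s where "s n = (SOME g. g \<in> Hom C ci (c (r n)))" for n
  have s: "s n \<in> Hom C ci (c (r n))" for n
  proof -
    have "\<exists>g. g \<in> Hom C ci (c (r n))" using r(2)[of n] by (auto simp: R_def ci_def)
    then show ?thesis unfolding s_def by (rule someI_ex)
  qed
  have "noetherian_on (out_mor C ci) (out_le C)" using gr ci by (simp add: groebner_def)
  moreover have "\<forall>n. s n \<in> out_mor C ci" using s by (auto simp: out_mor_def Hom_def)
  ultimately obtain i j where ij: "i < j" and le: "out_le C (s i) (s j)"
    unfolding noetherian_on_def by blast
  then obtain h where h: "h \<in> Mor C" "Dom C h = Cod C (s i)" "s j = Cmp C h (s i)"
    by (auto simp: out_le_def)
  have si: "s i \<in> Mor C" "Cod C (s i) = c (r i)" "Dom C (s i) = ci" using s[of i] by (auto simp: Hom_def)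
  have "\<forall>f\<in>Mor C. \<forall>g\<in>Mor C. Cod C f = Dom C g \<longrightarrow> Cmp C g f \<in> Hom C (Dom C f) (Cod C g)"
    using catC unfolding is_category_def by (elim conjE)
  then have "Cmp C h (s i) \<in> Hom C (Dom C (s i)) (Cod C h)"
    using si(1) h(1) h(2) by simp
  then have "Cod C h = c (r j)" using s[of j] h(3) by (auto simp: Hom_def)
  moreover have "\<forall>f\<in>Mor C. Fm f \<in> Hom numOp_cat (Fo (Dom C f)) (Fo (Cod C f))"
    using fnc unfolding is_functor_def by (elim conjE)
  ultimately have "Fm h \<in> Hom numOp_cat (Fo (c (r i))) (Fo (c (r j)))"
    using h(1,2) si(2) by metis
  then obtain qs \<sigma> where m: "is_morph (Fo (c (r i))) (Fo (c (r j))) qs \<sigma>" using hom_numOp by blast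
  have "card (NL (Fo (c (r j)))) \<le> card (NL (Fo (c (r i))))"
    using NL_card_le[OF m] X[of "r i"] X[of "r j"] by simp
  then have "2 * Suc (r j) \<le> 2 * Suc (r i)" using X[of "r i"] X[of "r j"] by simp
  moreover have "r i < r j" using r(1) ij by (simp add: strict_mono_def)
  ultimately show False by simp
qed

end
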